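(* Let $e,m_+,T_+,T_->0$. There exist constants $0<C_1\le C_1'$ and $0<C_2\le C_2'$, depending only on $e,m_+,T_+,T_-$ (in particular independent of $k,\xi$), such that for every $k\in\mathbb{Z}\setminus\{0\}$, $\xi\in\mathbb{R}$ and every solution $A(t)=(A_1(t),A_2(t))^\top\in\mathbb{C}^2$ of $\frac{d}{dt}A=L_+(t)A$ on $[0,\infty)$, the functional $$\mathcal{E}_+(t)=\sqrt{\tfrac{p_1}{m_1}}|A_1|^2+2\frac{h_1}{\sqrt{m_1p_1}}\Re(A_1\bar A_2)+\sqrt{\tfrac{m_1}{p_1}}|A_2|^2$$ satisfies, for all $t\ge0$, $$C_1\mathcal{E}_+(0)\le\mathcal{E}_+(t)\le C_1'\mathcal{E}_+(0),\qquad C_2|A(0)|\le|A(t)|\le C_2'|A(0)|.$$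
   Context: For fixed $k\in\mathbb{Z}\setminus\{0\}$, $\xi\in\mathbb{R}$ let $\alpha(t)=k^2+(\xi-kt)^2$, so $\partial_t\alpha=-2k(\xi-kt)$. Define $h_1(t)=\frac14\alpha^{-1}\partial_t\alpha$, $m_1(t)=\sqrt{\frac{T_+}{m_+}}\alpha^{1/2}$, $p_1(t)=\frac{4\pi e^2}{\sqrt{m_+T_+}}\frac{\alpha^{1/2}}{\alpha+4\pi e^2/T_-}+\sqrt{\frac{m_+}{T_+}}\frac{2k^2}{\alpha^{3/2}}+\sqrt{\frac{T_+}{m_+}}\alpha^{1/2}$, and $$L_+(t)=\begin{pmatrix}-h_1(t) & -m_1(t)\\ p_1(t) & h_1(t)\end{pmatrix}.$$ (This is the Fourier-side symmetrized form, in the sheared coordinates $X=x-yt$, $Y=y$, of the linearized ion Euler–Poisson system around the Couette flow.) *)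

theory Defs
  imports "HOL-Analysis.Analysis"
begin

definition alpha :: "int \<Rightarrow> real \<Rightarrow> real \<Rightarrow> real" where
  "alpha k \<xi> t = (real_of_int k)\<^sup>2 + (\<xi> - real_of_int k * t)\<^sup>2"

definition dalpha :: "int \<Rightarrow> real \<Rightarrow> real \<Rightarrow> real" where
  "dalpha k \<xi> t = - 2 * real_of_int k * (\<xi> - real_of_int k * t)"

definition h1 :: "int \<Rightarrow> real \<Rightarrow> real \<Rightarrow> real" where
  "h1 k \<xi> t = (1/4) * dalpha k \<xi> t / alpha k \<xi> t"

definition m1 :: "real \<Rightarrow> real \<Rightarrow> int \<Rightarrow> real \<Rightarrow> real \<Rightarrow> real" where
  "m1 mp Tp k \<xi> t = sqrt (Tp / mp) * sqrt (alpha k \<xi> t)"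

definition p1 :: "real \<Rightarrow> real \<Rightarrow> real \<Rightarrow> real \<Rightarrow> int \<Rightarrow> real \<Rightarrow> real \<Rightarrow> real" where
  "p1 e mp Tp Tm k \<xi> t =
     4 * pi * e\<^sup>2 / sqrt (mp * Tp) * sqrt (alpha k \<xi> t) / (alpha k \<xi> t + 4 * pi * e\<^sup>2 / Tm)
     + sqrt (mp / Tp) * (2 * (real_of_int k)\<^sup>2) / (alpha k \<xi> t) powr (3/2)
     + sqrt (Tp / mp) * sqrt (alpha k \<xi> t)"

text \<open>A = (A1, A2) solves dA/dt = L_+(t) A on [0,\<infinity>), where
  L_+ = [[-h1, -m1],[p1, h1]].\<close>
definition is_solution ::
  "real \<Rightarrow> real \<Rightarrow> real \<Rightarrow> real \<Rightarrow> int \<Rightarrow> real \<Rightarrow> (real \<Rightarrow> complex) \<Rightarrow> (real \<Rightarrow> complex) \<Rightarrow> bool" where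
  "is_solution e mp Tp Tm k \<xi> A1 A2 \<longleftrightarrow>
     (\<forall>t\<ge>0.
        (A1 has_vector_derivative
           (complex_of_real (- h1 k \<xi> t) * A1 t - complex_of_real (m1 mp Tp k \<xi> t) * A2 t))
           (at t within {0..}) \<and>
        (A2 has_vector_derivative
           (complex_of_real (p1 e mp Tp Tm k \<xi> t) * A1 t + complex_of_real (h1 k \<xi> t) * A2 t))
           (at t within {0..}))"

definition energy ::
  "real \<Rightarrow> real \<Rightarrow> real \<Rightarrow> real \<Rightarrow> int \<Rightarrow> real \<Rightarrow> (real \<Rightarrow> complex) \<Rightarrow> (real \<Rightarrow> complex) \<Rightarrow> real \<Rightarrow> real" where
  "energy e mp Tp Tm k \<xi> A1 A2 t =
     (let m = m1 mp Tp k \<xi> t; p = p1 e mp Tp Tm k \<xi> t; h = h1 k \<xi> t in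
      sqrt (p / m) * (cmod (A1 t))\<^sup>2
      + 2 * h / sqrt (m * p) * Re (A1 t * cnj (A2 t))
      + sqrt (m / p) * (cmod (A2 t))\<^sup>2)"

definition vnorm :: "complex \<Rightarrow> complex \<Rightarrow> real" where
  "vnorm a b = sqrt ((cmod a)\<^sup>2 + (cmod b)\<^sup>2)"

end

theory Submission
  imports Defs
begin


lemma mono_within:
  fixes f f' :: "real \<Rightarrow> real"
  assumes d: "\<And>t. t \<ge> 0 \<Longrightarrow> (f has_real_derivative f' t) (at t within {0..})"
    and n: "\<And>t. t \<ge> 0 \<Longrightarrow> f' t \<le> 0"
    and xy: "0 \<le> x" "x \<le> y"
  shows "f y \<le> f x"
proof (rule DERIV_nonpos_imp_decreasing_open[OF xy(2)])
  fix z assume z: "x < z" "z < y"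
  have "(f has_real_derivative f' z) (at z within {0<..})"
    using d[of z] z xy by (auto intro: DERIV_subset)
  then have "(f has_real_derivative f' z) (at z)"
    using z xy by (subst (asm) at_within_open) auto
  then show "\<exists>y. (f has_real_derivative y) (at z) \<and> y \<le> 0" using n[of z] z xy by auto
next
  show "continuous_on {x..y} f"
    unfolding continuous_on_eq_continuous_within
  proof
    fix z assume z: "z \<in> {x..y}"
    have "continuous (at z within {0..}) f" using d[of z] z xy by (auto intro: DERIV_continuous)
    then show "continuous (at z within {x..y}) f"
      by (rule continuous_within_subset) (use xy in auto)
  qed
qed

lemma gronwall_two:
  fixes E E' g \<Phi> :: "real \<Rightarrow> real" and K M :: real
  assumes dE: "\<And>t. t \<ge> 0 \<Longrightarrow> (E has_real_derivative E' t) (at t within {0..})"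
    and dP: "\<And>t. t \<ge> 0 \<Longrightarrow> (\<Phi> has_real_derivative g t) (at t within {0..})"
    and b: "\<And>t. t \<ge> 0 \<Longrightarrow> \<bar>E' t\<bar> \<le> K * g t * E t"
    and PM: "\<And>t. t \<ge> 0 \<Longrightarrow> \<bar>\<Phi> t - \<Phi> 0\<bar> \<le> M"
    and E0: "E 0 \<ge> 0" and K0: "K \<ge> 0" and t: "t \<ge> 0"
  shows "E 0 * exp (- (K*M)) \<le> E t \<and> E t \<le> E 0 * exp (K*M)"
proof -
  have up: "E t * exp (- (K * \<Phi> t)) \<le> E 0 * exp (- (K * \<Phi> 0))"
  proof (rule mono_within[where f="\<lambda>t. E t * exp (- (K * \<Phi> t))"
          and f'="\<lambda>t. (E' t - K * g t * E t) * exp (- (K * \<Phi> t))"])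
    fix s :: real assume s: "s \<ge> 0"
    show "((\<lambda>t. E t * exp (- (K * \<Phi> t))) has_real_derivative
          (E' t - K * g t * E t) * exp (- (K * \<Phi> t))) (at t within {0..})" if "t \<ge> 0" for t
      using dE[OF that] dP[OF that]
      by (auto intro!: derivative_eq_intros simp: algebra_simps)
    show "(E' s - K * g s * E s) * exp (- (K * \<Phi> s)) \<le> 0"
      using b[OF s] by (intro mult_nonpos_nonneg) auto
  qed (use t in auto)
  have lo: "E 0 * exp (K * \<Phi> 0) \<le> E t * exp (K * \<Phi> t)"
  proof -
    have "(\<lambda>t. - (E t * exp (K * \<Phi> t))) t \<le> (\<lambda>t. - (E t * exp (K * \<Phi> t))) 0"
    proof (rule mono_within[where f="\<lambda>t. - (E t * exp (K * \<Phi> t))" and f'="\<lambda>t. - ((E' t + K * g t * E t) * exp (K * \<Phi> t))"])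
      fix s :: real assume s: "s \<ge> 0"
      show "((\<lambda>t. - (E t * exp (K * \<Phi> t))) has_real_derivative
            - ((E' t + K * g t * E t) * exp (K * \<Phi> t))) (at t within {0..})" if "t \<ge> 0" for t
        using dE[OF that] dP[OF that]
        by (auto intro!: derivative_eq_intros simp: algebra_simps)
      show "- ((E' s + K * g s * E s) * exp (K * \<Phi> s)) \<le> 0"
      proof -
        have "0 \<le> (E' s + K * g s * E s) * exp (K * \<Phi> s)"
          using b[OF s] by (intro mult_nonneg_nonneg) (auto simp: abs_le_iff)
        then show ?thesis by simp
      qed
    qed (use t in auto)
    then show ?thesis by simp
  qed
  have KM: "\<bar>K * (\<Phi> t - \<Phi> 0)\<bar> \<le> K * M"
    using PM[OF t] K0 by (simp add: abs_mult mult_left_mono)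
  have e1: "exp (K * (\<Phi> t - \<Phi> 0)) \<le> exp (K * M)" using KM by simp
  have e2: "exp (- (K * M)) \<le> exp (K * (\<Phi> 0 - \<Phi> t))" using KM by (simp add: algebra_simps)
  have "E t \<le> E 0 * exp (K * (\<Phi> t - \<Phi> 0))"
  proof -
    have "E t = E t * exp (- (K * \<Phi> t)) * exp (K * \<Phi> t)" by (simp add: exp_minus field_simps)
    also have "\<dots> \<le> E 0 * exp (- (K * \<Phi> 0)) * exp (K * \<Phi> t)"
      using up by (intro mult_right_mono) auto
    also have "\<dots> = E 0 * exp (K * (\<Phi> t - \<Phi> 0))"
      by (simp add: algebra_simps flip: exp_add)
    finally show ?thesis .
  qed
  also have "\<dots> \<le> E 0 * exp (K * M)" using e1 E0 by (intro mult_left_mono) auto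
  finally have A: "E t \<le> E 0 * exp (K * M)" .
  have "E 0 * exp (- (K * M)) \<le> E 0 * exp (K * (\<Phi> 0 - \<Phi> t))"
    using e2 E0 by (intro mult_left_mono) auto
  also have "\<dots> = E 0 * exp (K * \<Phi> 0) * exp (- (K * \<Phi> t))"
    by (simp add: algebra_simps flip: exp_add)
  also have "\<dots> \<le> E t * exp (K * \<Phi> t) * exp (- (K * \<Phi> t))"
    using lo by (intro mult_right_mono) auto
  also have "\<dots> = E t" by (simp add: exp_minus field_simps)
  finally show ?thesis using A by simp
qed



lemma twoR_le:
  fixes aa U V R :: real
  assumes "aa \<ge> 1" "U \<ge> 0" "V \<ge> 0" "R\<^sup>2 \<le> U * V"
  shows "2 * \<bar>R\<bar> \<le> aa * U + V / aa"
proof -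
  define N where "N = aa * U + V / aa"
  have N0: "N \<ge> 0" using assms by (simp add: N_def)
  have "N\<^sup>2 - 4 * (U * V) = (aa * U - V / aa)\<^sup>2"
    using assms(1) by (simp add: N_def power2_eq_square field_simps)
  then have "N\<^sup>2 \<ge> 4 * R\<^sup>2" using assms(4) by (smt (verit) zero_le_power2)
  then have "(2 * \<bar>R\<bar>)\<^sup>2 \<le> N\<^sup>2" by (simp add: power_mult_distrib)
  then show ?thesis using N0 unfolding N_def[symmetric] by (rule power2_le_imp_le)
qed

lemma energy_alg:
  fixes aa U V R bb daa dbb K1 K2 g :: real
  assumes a: "aa \<ge> 1" "U \<ge> 0" "V \<ge> 0" "R\<^sup>2 \<le> U * V" "\<bar>bb\<bar> \<le> 1/2"
    and d: "\<bar>daa\<bar> \<le> K1 * g" "\<bar>dbb\<bar> \<le> K2 * g" "g \<ge> 0" "K1 \<ge> 0" "K2 \<ge> 0"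
  shows "\<bar>daa * U + 2 * dbb * R - daa / aa\<^sup>2 * V\<bar> \<le> (2 * (K1 + K2)) * g * (aa * U + 2 * bb * R + V / aa)"
    and "(aa * U + V / aa) / 2 \<le> aa * U + 2 * bb * R + V / aa"
    and "aa * U + 2 * bb * R + V / aa \<le> 3 / 2 * (aa * U + V / aa)"
proof -
  define N where "N = aa * U + V / aa"
  have R2: "2 * \<bar>R\<bar> \<le> N" unfolding N_def by (rule twoR_le) (use a in auto)
  have bR: "\<bar>2 * bb * R\<bar> \<le> N / 2"
  proof -
    have "\<bar>2 * bb * R\<bar> = \<bar>bb\<bar> * (2 * \<bar>R\<bar>)" by (simp add: abs_mult)
    also have "\<dots> \<le> 1/2 * N" using a(5) R2 by (intro mult_mono) auto
    finally show ?thesis by simp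
  qed
  have Ex: "aa * U + 2 * bb * R + V / aa = N + 2 * bb * R" by (simp add: N_def)
  have x1: "- (N/2) \<le> 2 * bb * R" and x2: "2 * bb * R \<le> N/2" using bR by (auto simp: abs_le_iff)
  show lo: "(aa * U + V / aa) / 2 \<le> aa * U + 2 * bb * R + V / aa"
    unfolding Ex unfolding N_def[symmetric] using x1 by linarith
  show "aa * U + 2 * bb * R + V / aa \<le> 3 / 2 * (aa * U + V / aa)"
    unfolding Ex unfolding N_def[symmetric] using x2 by linarith
  have t1: "\<bar>daa * U\<bar> \<le> K1 * g * (aa * U)"
  proof -
    have "\<bar>daa * U\<bar> = \<bar>daa\<bar> * U" using a by (simp add: abs_mult)
    also have "\<dots> \<le> (K1 * g) * U" using d a by (intro mult_right_mono) auto
    also have "\<dots> \<le> (K1 * g) * (aa * U)"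
      using a d by (intro mult_left_mono) (auto simp: mult_le_cancel_right1 intro: mult_right_mono[of 1 aa U, simplified])
    finally show ?thesis .
  qed
  have t3: "\<bar>daa / aa\<^sup>2 * V\<bar> \<le> K1 * g * (V / aa)"
  proof -
    have "\<bar>daa / aa\<^sup>2 * V\<bar> = \<bar>daa\<bar> * (V / aa) / aa" using a by (simp add: abs_mult power2_eq_square)
    also have "\<dots> \<le> \<bar>daa\<bar> * (V / aa)"
    proof -
      have "0 \<le> \<bar>daa\<bar> * (V / aa)" using a by simp
      then have "\<bar>daa\<bar> * (V / aa) * 1 \<le> \<bar>daa\<bar> * (V / aa) * aa" using a by (intro mult_left_mono) auto
      then show ?thesis using a by (simp add: divide_le_eq)
    qed
    also have "\<dots> \<le> K1 * g * (V / aa)" using a d by (intro mult_right_mono) auto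
    finally show ?thesis .
  qed
  have t2: "\<bar>2 * dbb * R\<bar> \<le> K2 * g * N"
  proof -
    have "\<bar>2 * dbb * R\<bar> = \<bar>dbb\<bar> * (2 * \<bar>R\<bar>)" by (simp add: abs_mult)
    also have "\<dots> \<le> (K2 * g) * N" using d R2 by (intro mult_mono) auto
    finally show ?thesis .
  qed
  have "\<bar>daa * U + 2 * dbb * R - daa / aa\<^sup>2 * V\<bar> \<le> K1 * g * (aa * U) + K2 * g * N + K1 * g * (V / aa)"
    using t1 t2 t3 by linarith
  also have "\<dots> = (K1 + K2) * g * N" by (simp add: N_def algebra_simps)
  also have "\<dots> \<le> (K1 + K2) * g * (2 * (aa * U + 2 * bb * R + V / aa))"
    using lo d by (intro mult_left_mono) (auto simp: N_def)
  also have "\<dots> = (2 * (K1 + K2)) * g * (aa * U + 2 * bb * R + V / aa)" by (simp add: algebra_simps add_divide_distrib)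
  finally show "\<bar>daa * U + 2 * dbb * R - daa / aa\<^sup>2 * V\<bar> \<le> (2 * (K1 + K2)) * g * (aa * U + 2 * bb * R + V / aa)" .
qed

context
  fixes e mp Tp Tm :: real and k :: int and \<xi> :: real
  assumes pos: "e > 0" "mp > 0" "Tp > 0" "Tm > 0" and knz: "k \<noteq> 0"
begin

definition "cA = 4*pi*e\<^sup>2/Tp"
definition "cB = 4*pi*e\<^sup>2/Tm"
definition "cD = 2*mp/Tp"
definition "sgm = sqrt (Tp/mp)"
definition "kr = real_of_int k"
definition "al t = alpha k \<xi> t"
definition "da t = dalpha k \<xi> t"
definition "Qf t = 1 + cA/(al t + cB) + cD*kr\<^sup>2/(al t)\<^sup>2"
definition "dQ t = (- cA/(al t + cB)\<^sup>2 - 2*cD*kr\<^sup>2/(al t)^3) * da t"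
definition "aa t = sqrt (Qf t)"
definition "daa t = dQ t / (2 * aa t)"
definition "bb t = da t / (4* sgm*al t * sqrt (al t) * aa t)"
definition "dbb t = (1/(4* sgm)) * (2*kr\<^sup>2/(al t * sqrt (al t) * aa t)
   - (3/2) * (da t)\<^sup>2/((al t)\<^sup>2 * sqrt (al t) * aa t) - da t * daa t/(al t * sqrt (al t) * (aa t)\<^sup>2))"

lemma consts_pos: "cA > 0" "cB > 0" "cD > 0" "sgm > 0"
  using pos by (auto simp: cA_def cB_def cD_def sgm_def)

lemma kr2: "kr\<^sup>2 \<ge> 1"
proof -
  have "\<bar>k\<bar> \<ge> 1" using knz by linarith
  then have "\<bar>kr\<bar> \<ge> 1" unfolding kr_def by linarith
  then show ?thesis by (metis abs_ge_self abs_power2 order.trans one_le_power power2_abs le_less)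
qed

lemma al_ge: "al t \<ge> kr\<^sup>2" "al t \<ge> 1" "al t > 0"
proof -
  have "al t = kr\<^sup>2 + (\<xi> - kr * t)\<^sup>2" by (simp add: al_def alpha_def kr_def)
  moreover have "(\<xi> - kr * t)\<^sup>2 \<ge> 0" by simp
  ultimately show "al t \<ge> kr\<^sup>2" "al t \<ge> 1" "al t > 0" using kr2 by linarith+
qed

lemma da_le: "\<bar>da t\<bar> \<le> al t" "(da t)\<^sup>2 \<le> 4*kr\<^sup>2*al t"
proof -
  define s where "s = \<xi> - kr * t"
  have d: "da t = -2 * kr * s" and a: "al t = kr\<^sup>2 + s\<^sup>2"
    by (auto simp: da_def dalpha_def al_def alpha_def s_def kr_def)
  have "2 * \<bar>kr\<bar> * \<bar>s\<bar> \<le> kr\<^sup>2 + s\<^sup>2"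
    using sum_squares_bound[of "\<bar>kr\<bar>" "\<bar>s\<bar>"] by (simp add: power2_abs)
  then show "\<bar>da t\<bar> \<le> al t" by (simp add: d a abs_mult)
  have "(da t)\<^sup>2 = 4 * kr\<^sup>2 * s\<^sup>2" by (simp add: d power_mult_distrib)
  also have "\<dots> \<le> 4*kr\<^sup>2*al t" unfolding a by (intro mult_left_mono) auto
  finally show "(da t)\<^sup>2 \<le> 4*kr\<^sup>2*al t" .
qed

lemma d_al: "(al has_real_derivative da t) (at t within S)"
  unfolding al_def[abs_def] da_def alpha_def dalpha_def
  by (auto intro!: derivative_eq_intros simp: algebra_simps power2_eq_square)

lemma d_da: "(da has_real_derivative 2*kr\<^sup>2) (at t within S)"
  unfolding da_def[abs_def] dalpha_def kr_def
  by (auto intro!: derivative_eq_intros simp: algebra_simps power2_eq_square)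

lemma Qf_ge: "Qf t \<ge> 1"
  using consts_pos al_ge[of t] unfolding Qf_def
  by (simp add: add_nonneg_nonneg)

lemma Qf_le: "Qf t \<le> 1 + cA/cB + cD"
proof -
  have "cA/(al t + cB) \<le> cA/cB"
    using consts_pos al_ge[of t] by (intro divide_left_mono) auto
  moreover have "cD * kr\<^sup>2/(al t)\<^sup>2 \<le> cD"
  proof -
    have "kr\<^sup>2 \<le> (al t)\<^sup>2"
      proof -
      have "al t * 1 \<le> al t * al t" using al_ge[of t] by (intro mult_left_mono) auto
      then show ?thesis unfolding power2_eq_square using al_ge(1)[of t, unfolded power2_eq_square] by linarith
    qed
    then have "kr\<^sup>2/(al t)\<^sup>2 \<le> 1" using al_ge[of t] by simp
    then show ?thesis using consts_pos by (simp add: mult_le_cancel_left1 times_divide_eq_right[symmetric] del: times_divide_eq_right)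
  qed
  ultimately show ?thesis unfolding Qf_def by linarith
qed

lemma aa_ge: "aa t \<ge> 1" "aa t > 0"
  using Qf_ge[of t] by (auto simp: aa_def)

lemma aa_sq: "(aa t)\<^sup>2 = Qf t"
  using Qf_ge[of t] by (simp add: aa_def)

lemma d_Qf: "(Qf has_real_derivative dQ t) (at t within S)"
proof -
  have "((\<lambda>t. 1 + cA/(al t + cB) + cD*kr\<^sup>2/(al t)\<^sup>2) has_real_derivative dQ t) (at t within S)"
    using d_al[of t S] al_ge[of t] consts_pos
    apply (auto intro!: derivative_eq_intros simp: dQ_def)
    apply (simp add: power2_eq_square power4_eq_xxxx power3_eq_cube field_simps)
    done
  then show ?thesis by (simp add: Qf_def[abs_def])
qed

lemma d_aa: "(aa has_real_derivative daa t) (at t within S)"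
proof -
  have "((\<lambda>t. sqrt (Qf t)) has_real_derivative daa t) (at t within S)"
    using d_Qf[of t S] Qf_ge[of t]
    by (auto intro!: derivative_eq_intros simp: daa_def aa_def field_simps)
  then show ?thesis by (simp add: aa_def[abs_def])
qed

definition "K1 = cA + 2 * cD"
definition "g t = kr\<^sup>2 / al t"

lemma g_nonneg: "g t \<ge> 0" using al_ge[of t] by (simp add: g_def)

lemma dQ_bound: "\<bar>dQ t\<bar> \<le> K1 * g t"
proof -
  define a where "a = al t"
  have a1: "a \<ge> 1" and ak: "a \<ge> kr\<^sup>2" and da: "\<bar>da t\<bar> \<le> a" using al_ge[of t] da_le[of t] by (auto simp: a_def)
  have k1: "kr\<^sup>2 \<ge> 1" by (rule kr2)
  have cp: "cA > 0" "cB > 0" "cD > 0" using consts_pos by auto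
  define X where "X = cA/(a + cB)\<^sup>2 + 2 * cD * kr\<^sup>2/a^3"
  have X0: "X \<ge> 0" using cp a1 by (simp add: X_def)
  have "\<bar>dQ t\<bar> = X * \<bar>da t\<bar>"
    by (simp add: dQ_def X_def a_def abs_mult) (use X0 in \<open>simp add: X_def a_def\<close>)
  also have "\<dots> \<le> X * a" using da X0 by (intro mult_left_mono) auto
  also have "\<dots> = cA * a/(a + cB)\<^sup>2 + 2 * cD * kr\<^sup>2/a\<^sup>2"
    using a1 by (simp add: X_def field_simps power2_eq_square power3_eq_cube)
  also have "\<dots> \<le> cA * kr\<^sup>2 / a + 2 * cD * kr\<^sup>2 / a"
  proof (rule add_mono)
    have "cA * a/(a + cB)\<^sup>2 \<le> cA * a / a\<^sup>2"
      using cp a1 by (intro divide_left_mono) (auto simp: power_mono)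
    also have "\<dots> = cA / a" using a1 by (simp add: power2_eq_square)
    also have "\<dots> \<le> cA * kr\<^sup>2 / a" using cp a1 k1 by (intro divide_right_mono) auto
    finally show "cA * a/(a + cB)\<^sup>2 \<le> cA * kr\<^sup>2 / a" .
    have "a \<le> a\<^sup>2" using a1 by (simp add: power2_eq_square)
    then show "2 * cD * kr\<^sup>2/a\<^sup>2 \<le> 2 * cD * kr\<^sup>2 / a"
      using cp a1 k1 by (intro divide_left_mono) auto
  qed
  also have "\<dots> = K1 * g t" by (simp add: K1_def g_def a_def add_divide_distrib algebra_simps)
  finally show ?thesis .
qed

lemma daa_bound: "\<bar>daa t\<bar> \<le> K1 * g t"
proof -
  have "\<bar>daa t\<bar> = \<bar>dQ t\<bar> / (2 * aa t)" using aa_ge[of t] by (simp add: daa_def abs_mult)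
  also have "\<dots> \<le> \<bar>dQ t\<bar>"
  proof -
    have "\<bar>dQ t\<bar> * 1 \<le> \<bar>dQ t\<bar> * (2 * aa t)" using aa_ge[of t] by (intro mult_left_mono) auto
    then show ?thesis using aa_ge[of t] by (simp add: divide_le_eq)
  qed
  finally show ?thesis using dQ_bound[of t] by linarith
qed

lemma bb_alg:
  fixes w A s K d q :: real
  assumes "w > 0" "A > 0" "s > 0"
  shows "(8 * (K * (s * (w*w * (w * A)))) - d * ((d * (4 * s) * w + 2 * (s * (w*w * (d * inverse w)))) * A
     + q * (4 * s * (w*w) * w))) / (16 * (s * (w*w * (w * (A * (s * (w*w * (w * A)))))))) =
    (2 * K / (w*w * w * A) - 3 * d\<^sup>2 / (2 * ((w*w)\<^sup>2 * w * A)) - d * q / (w*w * w * A\<^sup>2)) / (4 * s)"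
  using assms by (simp add: field_simps power2_eq_square)

lemma d_bb: "(bb has_real_derivative dbb t) (at t within S)"
proof -
  have a0: "al t > 0" using al_ge[of t] by auto
  have s0: "sqrt (al t) > 0" using a0 by auto
  have ss: "sqrt (al t) * sqrt (al t) = al t" using a0 by simp
  have "((\<lambda>t. da t / (4 * sgm * al t * sqrt (al t) * aa t)) has_real_derivative dbb t) (at t within S)"
    using d_al[of t S] d_da[of t S] d_aa[of t S] a0 aa_ge[of t] consts_pos
    apply (auto intro!: derivative_eq_intros simp: dbb_def)
    using bb_alg[of "sqrt (al t)" "aa t" sgm "kr\<^sup>2" "da t" "daa t"] ss s0
    by (simp add: ss)
  then show ?thesis by (simp add: bb_def[abs_def])
qed

definition "K2 = (8 + K1) / (4 * sgm)"

lemma dbb_bound: "\<bar>dbb t\<bar> \<le> K2 * g t"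
proof -
  define a where "a = al t"
  define w where "w = sqrt (al t)"
  define A where "A = aa t"
  have a1: "a \<ge> 1" and ak: "a \<ge> kr\<^sup>2" and da: "\<bar>da t\<bar> \<le> a" and da2: "(da t)\<^sup>2 \<le> 4 * kr\<^sup>2 * a"
    using al_ge[of t] da_le[of t] by (auto simp: a_def)
  have w1: "w \<ge> 1" using a1 by (simp add: w_def a_def)
  have A1: "A \<ge> 1" using aa_ge[of t] by (simp add: A_def)
  have gdef: "g t = kr\<^sup>2 / a" by (simp add: g_def a_def)
  have g0: "g t \<ge> 0" by (rule g_nonneg)
  have sp: "sgm > 0" using consts_pos by auto
  have k0: "kr\<^sup>2 \<ge> 0" by simp
  define T1 where "T1 = 2 * kr\<^sup>2 / (a * w * A)"
  define T2 where "T2 = 3 * (da t)\<^sup>2 / (2 * (a\<^sup>2 * w * A))"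
  define T3 where "T3 = da t * daa t / (a * w * A\<^sup>2)"
  have dbb_eq: "dbb t = (T1 - T2 - T3) / (4 * sgm)"
    by (simp add: dbb_def T1_def T2_def T3_def a_def w_def A_def)
  have awA: "a * w * A \<ge> a" 
  proof -
    have "w * A \<ge> 1" using w1 A1 by (metis mult_mono' mult_1 zero_le_one)
    then have "a * (w * A) \<ge> a * 1" using a1 by (intro mult_left_mono) auto
    then show ?thesis by (simp add: mult.assoc)
  qed
  have awA2: "a * w * A\<^sup>2 \<ge> a"
  proof -
    have "A\<^sup>2 \<ge> 1" using A1 by (simp add: one_le_power)
    then have "w * A\<^sup>2 \<ge> 1" using w1 by (metis mult_mono' mult_1 zero_le_one)
    then have "a * (w * A\<^sup>2) \<ge> a * 1" using a1 by (intro mult_left_mono) auto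
    then show ?thesis by (simp add: mult.assoc)
  qed
  have t1: "\<bar>T1\<bar> \<le> 2 * g t"
  proof -
    have p: "a * w * A > 0" using awA a1 by linarith
    have p2: "a * w * A * a > 0" using p a1 by simp
    have "T1 \<le> 2 * kr\<^sup>2 / a" unfolding T1_def
      by (rule divide_left_mono) (use awA a1 k0 p2 in auto)
    moreover have "T1 \<ge> 0" unfolding T1_def by (rule divide_nonneg_pos) (use p in auto)
    ultimately show ?thesis by (simp add: gdef)
  qed
  have t2: "\<bar>T2\<bar> \<le> 6 * g t"
  proof -
    have den: "2 * (a\<^sup>2 * w * A) \<ge> 2 * a\<^sup>2"
    proof -
      have "w * A \<ge> 1" using w1 A1 by (metis mult_mono' mult_1 zero_le_one)
      then have "a\<^sup>2 * (w * A) \<ge> a\<^sup>2 * 1" by (intro mult_left_mono) auto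
      then show ?thesis by (simp add: mult.assoc)
    qed
    have "T2 \<le> 3 * (4 * kr\<^sup>2 * a) / (2 * (a\<^sup>2 * w * A))"
    proof -
      have n1: "3 * (da t)\<^sup>2 \<le> 3 * (4 * kr\<^sup>2 * a)" using da2 by linarith
      have "0 \<le> 2 * a\<^sup>2" by simp
      then have n2: "0 \<le> 2 * (a\<^sup>2 * w * A)" using den by linarith
      show ?thesis unfolding T2_def by (rule divide_right_mono[OF n1 n2])
    qed
    also have "\<dots> \<le> 3 * (4 * kr\<^sup>2 * a) / (2 * a\<^sup>2)"
    proof (rule divide_left_mono[OF den])
      have "a > 0" "w > 0" "A > 0" using a1 w1 A1 by auto
      then show "0 < 2 * (a\<^sup>2 * w * A) * (2 * a\<^sup>2)" by (simp add: zero_less_mult_iff)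
      show "0 \<le> 3 * (4 * kr\<^sup>2 * a)" using a1 by simp
    qed
    also have "\<dots> = 6 * g t" using a1 by (simp add: gdef power2_eq_square field_simps)
    finally have "T2 \<le> 6 * g t" .
    moreover have "T2 \<ge> 0" unfolding T2_def using w1 A1 a1 by (intro divide_nonneg_nonneg) auto
    ultimately show ?thesis by simp
  qed
  have t3: "\<bar>T3\<bar> \<le> K1 * g t"
  proof -
    have K10: "K1 \<ge> 0" using consts_pos by (simp add: K1_def)
    have "\<bar>T3\<bar> = \<bar>da t\<bar> * \<bar>daa t\<bar> / (a * w * A\<^sup>2)" using awA2 a1 w1 by (simp add: T3_def abs_mult)
    also have "\<dots> \<le> a * (K1 * g t) / (a * w * A\<^sup>2)"
      using da daa_bound[of t] awA2 a1 w1 A1 by (intro divide_right_mono mult_mono) auto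
    also have "\<dots> \<le> a * (K1 * g t) / a"
      using awA2 a1 K10 g0 w1 A1 by (intro divide_left_mono) (auto simp: zero_less_mult_iff)
    also have "\<dots> = K1 * g t" using a1 by simp
    finally show ?thesis .
  qed
  have "\<bar>dbb t\<bar> = \<bar>T1 - T2 - T3\<bar> / (4 * sgm)" using sp by (simp add: dbb_eq)
  also have "\<dots> \<le> (2 * g t + 6 * g t + K1 * g t) / (4 * sgm)"
    using t1 t2 t3 sp by (intro divide_right_mono) auto
  also have "\<dots> = K2 * g t" by (simp add: K2_def field_simps)
  finally show ?thesis .
qed

lemma bb_bound: "\<bar>bb t\<bar> \<le> 1/2"
proof -
  define a where "a = al t"
  define w where "w = sqrt (al t)"
  have a1: "a \<ge> 1" and da2: "(da t)\<^sup>2 \<le> 4 * kr\<^sup>2 * a"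
    using al_ge[of t] da_le[of t] by (auto simp: a_def)
  have ww: "w\<^sup>2 = a" using a1 by (simp add: w_def a_def)
  have w0: "w > 0" using a1 by (simp add: w_def a_def)
  define den where "den = 4 * sgm * a * w * aa t"
  have den0: "den > 0" using consts_pos aa_ge[of t] a1 w0 by (simp add: den_def)
  have sc: "sgm\<^sup>2 * cD = 2" using pos by (simp add: sgm_def cD_def)
  have Qg: "Qf t \<ge> cD * kr\<^sup>2 / a\<^sup>2"
    using consts_pos al_ge[of t] by (simp add: Qf_def a_def add_nonneg_nonneg)
  have "den\<^sup>2 = 16 * sgm\<^sup>2 * a\<^sup>2 * w\<^sup>2 * Qf t"
    by (simp add: den_def power_mult_distrib aa_sq)
  also have "\<dots> \<ge> 16 * sgm\<^sup>2 * a\<^sup>2 * w\<^sup>2 * (cD * kr\<^sup>2 / a\<^sup>2)"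
    using Qg by (intro mult_left_mono) auto
  also have "16 * sgm\<^sup>2 * a\<^sup>2 * w\<^sup>2 * (cD * kr\<^sup>2 / a\<^sup>2) = 16 * (sgm\<^sup>2 * cD) * kr\<^sup>2 * a"
    unfolding ww using a1 by (simp add: field_simps power2_eq_square)
  finally have "den\<^sup>2 \<ge> 16 * (sgm\<^sup>2 * cD) * kr\<^sup>2 * a" .
  then have "den\<^sup>2 \<ge> 32 * kr\<^sup>2 * a" by (simp add: sc)
  moreover have "kr\<^sup>2 * a \<ge> 0" using a1 by simp
  ultimately have "(2 * da t)\<^sup>2 \<le> den\<^sup>2" using da2 by (simp add: power_mult_distrib)
  then have "\<bar>2 * da t\<bar> \<le> den" using den0 by (metis abs_le_square_iff abs_of_pos)
  then have "\<bar>da t\<bar> / den \<le> 1/2" using den0 by (simp add: divide_le_eq abs_mult)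
  moreover have "bb t = da t / den" by (simp add: bb_def den_def a_def w_def)
  ultimately show ?thesis using den0 by (simp add: abs_divide)
qed

lemma p1_alg:
  fixes P d w st sm K :: real
  assumes "d > 0" "w > 0" "st > 0" "sm > 0"
  shows "P / (sm * st) * w / d + sm / st * (2 * K) / (w * w * w) + st / sm * w
    = (1 + P / (st * st) / d + 2 * (sm * sm) / (st * st) * K / (w * w)\<^sup>2) * (st / sm * w)"
  using assms by (simp add: field_simps power2_eq_square)

lemma m1_eq: "m1 mp Tp k \<xi> t = sgm * sqrt (al t)"
  by (simp add: m1_def sgm_def al_def)

lemma m1_pos: "m1 mp Tp k \<xi> t > 0"
  using consts_pos al_ge[of t] by (simp add: m1_eq)

lemma p1_eq: "p1 e mp Tp Tm k \<xi> t = Qf t * m1 mp Tp k \<xi> t"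
proof -
  define a where "a = alpha k \<xi> t"
  define w where "w = sqrt a"
  have a0: "a > 0" using al_ge[of t] by (simp add: a_def al_def)
  have w0: "w > 0" and ww: "a = w * w" using a0 by (auto simp: w_def)
  have pw: "a powr (3/2) = a * w"
  proof -
    have "a powr (3/2) = a powr (1 + 1/2)" by simp
    also have "\<dots> = a powr 1 * a powr (1/2)" by (rule powr_add)
    also have "\<dots> = a * a powr (1/2)" using a0 by simp
    also have "\<dots> = a * w" using a0 by (simp add: powr_half_sqrt w_def)
    finally show ?thesis .
  qed
  define st where "st = sqrt Tp"
  define sm where "sm = sqrt mp"
  have st0: "st > 0" and sm0: "sm > 0" using pos by (auto simp: st_def sm_def)
  have Tpe: "Tp = st * st" and mpe: "mp = sm * sm" using pos by (auto simp: st_def sm_def)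
  have e1: "sqrt (mp * Tp) = sm * st" by (simp add: st_def sm_def real_sqrt_mult)
  have e2: "sqrt (mp / Tp) = sm / st" by (simp add: st_def sm_def real_sqrt_divide)
  have e3: "sqrt (Tp / mp) = st / sm" by (simp add: st_def sm_def real_sqrt_divide)
  have "p1 e mp Tp Tm k \<xi> t = 4 * pi * e\<^sup>2 / (sm * st) * w / (a + cB)
     + sm / st * (2 * kr\<^sup>2) / (a * w) + st / sm * w"
    unfolding p1_def e1 e2 e3 a_def[symmetric] pw by (simp add: w_def kr_def cB_def)
  also have "\<dots> = (1 + cA/(a + cB) + cD * kr\<^sup>2/a\<^sup>2) * (st / sm * w)"
  proof -
    have d0: "a + cB > 0" using a0 consts_pos by simp
    have "cA = 4 * pi * e\<^sup>2 / (st * st)" "cD = 2 * (sm * sm) / (st * st)"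
      unfolding cA_def cD_def by (simp_all add: Tpe[symmetric] mpe[symmetric])
    then show ?thesis
      using p1_alg[OF d0 w0 st0 sm0, of "4 * pi * e\<^sup>2" "kr\<^sup>2"] ww by (simp add: mult.assoc)
  qed
  also have "\<dots> = Qf t * m1 mp Tp k \<xi> t"
    by (simp add: Qf_def m1_eq sgm_def e3 a_def w_def al_def)
  finally show ?thesis .
qed

lemma h1_eq: "h1 k \<xi> t = bb t * m1 mp Tp k \<xi> t * aa t"
  using consts_pos al_ge[of t] aa_ge[of t]
  by (simp add: h1_def bb_def m1_eq da_def al_def field_simps)

lemma d_Phi: "((\<lambda>t. arctan ((kr * t - \<xi>) / kr)) has_real_derivative g t) (at t within S)"
proof -
  have k0: "kr \<noteq> 0" using knz by (simp add: kr_def)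
  have alx: "al t = kr\<^sup>2 + (\<xi> - kr * t)\<^sup>2" by (simp add: al_def alpha_def kr_def)
  have eq: "inverse (1 + ((kr * t - \<xi>) / kr)\<^sup>2) = g t"
    unfolding g_def alx using k0 by (simp add: field_simps power2_eq_square)
  show ?thesis
    by (auto intro!: derivative_eq_intros simp: k0 eq[symmetric])
qed

lemma energy_eq: "energy e mp Tp Tm k \<xi> A1 A2 t =
   aa t * (cmod (A1 t))\<^sup>2 + 2 * bb t * Re (A1 t * cnj (A2 t)) + (cmod (A2 t))\<^sup>2 / aa t"
proof -
  define m where "m = m1 mp Tp k \<xi> t"
  have m0: "m > 0" using m1_pos by (simp add: m_def)
  have Q1: "Qf t \<ge> 1" by (rule Qf_ge)
  have a0: "aa t > 0" using aa_ge by auto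
  have e1: "sqrt (p1 e mp Tp Tm k \<xi> t / m) = aa t"
    using m0 by (simp add: p1_eq m_def aa_def)
  have e2: "sqrt (m * p1 e mp Tp Tm k \<xi> t) = m * aa t"
    using m0 Q1 by (simp add: p1_eq m_def[symmetric] aa_def real_sqrt_mult power2_eq_square[symmetric])
  have e3: "sqrt (m / p1 e mp Tp Tm k \<xi> t) = 1 / aa t"
    using m0 Q1 by (simp add: p1_eq m_def[symmetric] aa_def real_sqrt_divide)
  have e4: "2 * h1 k \<xi> t / (m * aa t) = 2 * bb t"
    using m0 a0 by (simp add: h1_eq m_def)
  show ?thesis
    unfolding energy_def Let_def m_def[symmetric] e1 e2 e3
    using e4 by simp
qed

lemma energy_deriv:
  assumes sol: "is_solution e mp Tp Tm k \<xi> A1 A2" and t: "t \<ge> 0"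
  shows "((\<lambda>t. energy e mp Tp Tm k \<xi> A1 A2 t) has_real_derivative
     (daa t * (cmod (A1 t))\<^sup>2 + 2 * dbb t * Re (A1 t * cnj (A2 t)) - daa t / (aa t)\<^sup>2 * (cmod (A2 t))\<^sup>2))
     (at t within {0..})"
proof -
  define h where "h = h1 k \<xi> t"
  define m where "m = m1 mp Tp k \<xi> t"
  define p where "p = p1 e mp Tp Tm k \<xi> t"
  have dA1: "(A1 has_vector_derivative (complex_of_real (- h) * A1 t - complex_of_real m * A2 t)) (at t within {0..})"
   and dA2: "(A2 has_vector_derivative (complex_of_real p * A1 t + complex_of_real h * A2 t)) (at t within {0..})"
    using sol t unfolding is_solution_def h_def m_def p_def by auto
  have dx1: "((\<lambda>t. Re (A1 t)) has_real_derivative (- h * Re (A1 t) - m * Re (A2 t))) (at t within {0..})"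
   and dy1: "((\<lambda>t. Im (A1 t)) has_real_derivative (- h * Im (A1 t) - m * Im (A2 t))) (at t within {0..})"
    using dA1 unfolding has_vector_derivative_complex_iff by auto
  have dx2: "((\<lambda>t. Re (A2 t)) has_real_derivative (p * Re (A1 t) + h * Re (A2 t))) (at t within {0..})"
   and dy2: "((\<lambda>t. Im (A2 t)) has_real_derivative (p * Im (A1 t) + h * Im (A2 t))) (at t within {0..})"
    using dA2 unfolding has_vector_derivative_complex_iff by auto
  define x1 where "x1 = (\<lambda>t. Re (A1 t))"
  define y1 where "y1 = (\<lambda>t. Im (A1 t))"
  define x2 where "x2 = (\<lambda>t. Re (A2 t))"
  define y2 where "y2 = (\<lambda>t. Im (A2 t))"
  have dx1': "(x1 has_real_derivative (- h * x1 t - m * x2 t)) (at t within {0..})"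
    using dx1 by (simp add: x1_def x2_def)
  have dy1': "(y1 has_real_derivative (- h * y1 t - m * y2 t)) (at t within {0..})"
    using dy1 by (simp add: y1_def y2_def)
  have dx2': "(x2 has_real_derivative (p * x1 t + h * x2 t)) (at t within {0..})"
    using dx2 by (simp add: x1_def x2_def)
  have dy2': "(y2 has_real_derivative (p * y1 t + h * y2 t)) (at t within {0..})"
    using dy2 by (simp add: y1_def y2_def)
  have fe: "(\<lambda>t. energy e mp Tp Tm k \<xi> A1 A2 t) = (\<lambda>t. aa t * ((x1 t)\<^sup>2 + (y1 t)\<^sup>2)
     + 2 * bb t * (x1 t * x2 t + y1 t * y2 t) + ((x2 t)\<^sup>2 + (y2 t)\<^sup>2) / aa t)"
    by (simp add: energy_eq cmod_power2 fun_eq_iff x1_def x2_def y1_def y2_def)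
  have a0: "aa t > 0" using aa_ge by auto
  have hh: "h = bb t * m * aa t" by (simp add: h_def m_def h1_eq)
  have pp: "p = (aa t)\<^sup>2 * m" by (simp add: p_def m_def p1_eq aa_sq)
  have rhs: "daa t * (cmod (A1 t))\<^sup>2 + 2 * dbb t * Re (A1 t * cnj (A2 t)) - daa t / (aa t)\<^sup>2 * (cmod (A2 t))\<^sup>2
     = daa t * ((x1 t)\<^sup>2 + (y1 t)\<^sup>2) + 2 * dbb t * (x1 t * x2 t + y1 t * y2 t) - daa t / (aa t)\<^sup>2 * ((x2 t)\<^sup>2 + (y2 t)\<^sup>2)"
    by (simp add: cmod_power2 x1_def x2_def y1_def y2_def)
  show ?thesis
    unfolding fe rhs
    apply (rule derivative_eq_intros dx1' dy1' dx2' dy2' d_aa d_bb refl)+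
    defer
    apply (rule refl)
    using a0 unfolding hh pp
    apply (simp add: field_simps power2_eq_square)
    apply (use a0 in simp)
    done
qed

definition "KK = 2 * (K1 + K2)"
definition "SQ = sqrt (1 + cA/cB + cD)"

lemma KK_nonneg: "KK \<ge> 0"
  using consts_pos by (simp add: KK_def K1_def K2_def)

lemma R_le: "(Re (A1 t * cnj (A2 t)))\<^sup>2 \<le> (cmod (A1 t))\<^sup>2 * (cmod (A2 t))\<^sup>2"
proof -
  have "\<bar>Re (A1 t * cnj (A2 t))\<bar> \<le> cmod (A1 t) * cmod (A2 t)"
    using abs_Re_le_cmod[of "A1 t * cnj (A2 t)"] by (simp add: norm_mult)
  then have "\<bar>Re (A1 t * cnj (A2 t))\<bar>\<^sup>2 \<le> (cmod (A1 t) * cmod (A2 t))\<^sup>2"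
    by (intro power_mono) auto
  then show ?thesis by (simp add: power_mult_distrib)
qed

lemma energy_facts:
  "(aa t * (cmod (A1 t))\<^sup>2 + (cmod (A2 t))\<^sup>2 / aa t) / 2 \<le> energy e mp Tp Tm k \<xi> A1 A2 t"
  "energy e mp Tp Tm k \<xi> A1 A2 t \<le> 3 / 2 * (aa t * (cmod (A1 t))\<^sup>2 + (cmod (A2 t))\<^sup>2 / aa t)"
  "\<bar>daa t * (cmod (A1 t))\<^sup>2 + 2 * dbb t * Re (A1 t * cnj (A2 t)) - daa t / (aa t)\<^sup>2 * (cmod (A2 t))\<^sup>2\<bar>
     \<le> KK * g t * energy e mp Tp Tm k \<xi> A1 A2 t"
  using energy_alg[OF aa_ge(1)[of t] _ _ R_le[of A1 t A2] bb_bound[of t] daa_bound[of t] dbb_bound[of t] g_nonneg[of t]]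
    consts_pos
  by (auto simp: energy_eq KK_def K1_def K2_def)

lemma energy_nonneg: "energy e mp Tp Tm k \<xi> A1 A2 t \<ge> 0"
proof -
  have "0 \<le> (aa t * (cmod (A1 t))\<^sup>2 + (cmod (A2 t))\<^sup>2 / aa t) / 2" using aa_ge[of t] by simp
  then show ?thesis using energy_facts(1)[of t A1 A2] by linarith
qed

lemma energy_gron:
  assumes sol: "is_solution e mp Tp Tm k \<xi> A1 A2" and t: "t \<ge> 0"
  shows "energy e mp Tp Tm k \<xi> A1 A2 0 * exp (- (KK * pi)) \<le> energy e mp Tp Tm k \<xi> A1 A2 t \<and>
         energy e mp Tp Tm k \<xi> A1 A2 t \<le> energy e mp Tp Tm k \<xi> A1 A2 0 * exp (KK * pi)"
proof (rule gronwall_two[where E="\<lambda>t. energy e mp Tp Tm k \<xi> A1 A2 t" and g=g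
     and \<Phi>="\<lambda>t. arctan ((kr * t - \<xi>) / kr)"])
  fix s :: real assume s: "s \<ge> 0"
  show "((\<lambda>t. energy e mp Tp Tm k \<xi> A1 A2 t) has_real_derivative
     (daa s * (cmod (A1 s))\<^sup>2 + 2 * dbb s * Re (A1 s * cnj (A2 s)) - daa s / (aa s)\<^sup>2 * (cmod (A2 s))\<^sup>2))
     (at s within {0..})" by (rule energy_deriv[OF sol s])
  show "((\<lambda>t. arctan ((kr * t - \<xi>) / kr)) has_real_derivative g s) (at s within {0..})" by (rule d_Phi)
  show "\<bar>daa s * (cmod (A1 s))\<^sup>2 + 2 * dbb s * Re (A1 s * cnj (A2 s)) - daa s / (aa s)\<^sup>2 * (cmod (A2 s))\<^sup>2\<bar>
     \<le> KK * g s * energy e mp Tp Tm k \<xi> A1 A2 s" by (rule energy_facts(3))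
  show "\<bar>arctan ((kr * s - \<xi>) / kr) - arctan ((kr * 0 - \<xi>) / kr)\<bar> \<le> pi"
    using arctan_bounded[of "(kr * s - \<xi>) / kr"] arctan_bounded[of "(kr * 0 - \<xi>) / kr"] by (simp add: abs_le_iff)
qed (use t energy_nonneg KK_nonneg in auto)

lemma SQ_ge: "SQ \<ge> 1" "aa t \<le> SQ"
proof -
  show "aa t \<le> SQ" unfolding aa_def SQ_def using Qf_le[of t] by simp
  then show "SQ \<ge> 1" using aa_ge[of t] by linarith
qed

lemma N_bounds:
  fixes U V :: real assumes "U \<ge> 0" "V \<ge> 0"
  shows "(U + V) / SQ \<le> aa t * U + V / aa t" "aa t * U + V / aa t \<le> SQ * (U + V)"
proof -
  have a1: "aa t \<ge> 1" and aS: "aa t \<le> SQ" and S1: "SQ \<ge> 1" using aa_ge[of t] SQ_ge(1) SQ_ge(2)[of t] by auto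
  have x1: "U / SQ \<le> U / 1" using assms S1 by (intro divide_left_mono) auto
  have x2: "1 * U \<le> aa t * U" using assms a1 by (intro mult_right_mono) auto
  have u1: "U / SQ \<le> aa t * U" using x1 x2 by simp
  have v1: "V / SQ \<le> V / aa t" using assms a1 aS by (intro divide_left_mono) auto
  show "(U + V) / SQ \<le> aa t * U + V / aa t" using u1 v1 by (simp add: add_divide_distrib)
  have u2: "aa t * U \<le> SQ * U" using assms aS by (intro mult_right_mono) auto
  have x3: "V / aa t \<le> V / 1" using assms a1 by (intro divide_left_mono) auto
  have x4: "1 * V \<le> SQ * V" using assms S1 by (intro mult_right_mono) auto
  have "V / aa t \<le> SQ * V" using x3 x4 by simp
  then show "aa t * U + V / aa t \<le> SQ * (U + V)" using u2 by (simp add: distrib_left)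
qed

lemma W_bounds:
  assumes sol: "is_solution e mp Tp Tm k \<xi> A1 A2" and t: "t \<ge> 0"
  defines "W \<equiv> \<lambda>t. (cmod (A1 t))\<^sup>2 + (cmod (A2 t))\<^sup>2"
  shows "W t \<le> 3 * SQ\<^sup>2 * exp (KK * pi) * W 0" "exp (- (KK * pi)) / (3 * SQ\<^sup>2) * W 0 \<le> W t"
proof -
  define E where "E = (\<lambda>t. energy e mp Tp Tm k \<xi> A1 A2 t)"
  define N where "N = (\<lambda>t. aa t * (cmod (A1 t))\<^sup>2 + (cmod (A2 t))\<^sup>2 / aa t)"
  have S1: "SQ \<ge> 1" using SQ_ge by auto
  have EN: "\<And>t. N t / 2 \<le> E t" "\<And>t. E t \<le> 3/2 * N t"
    using energy_facts unfolding E_def N_def by auto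
  have NW: "\<And>t. W t / SQ \<le> N t" "\<And>t. N t \<le> SQ * W t"
    using N_bounds unfolding N_def W_def by auto
  have G: "E 0 * exp (- (KK * pi)) \<le> E t" "E t \<le> E 0 * exp (KK * pi)"
    using energy_gron[OF sol t] unfolding E_def by auto
  have W0: "W 0 \<ge> 0" by (simp add: W_def)
  have "W t = SQ * (W t / SQ)" using S1 by simp
  also have "\<dots> \<le> SQ * N t" using NW(1) S1 by (intro mult_left_mono) auto
  also have "\<dots> \<le> SQ * (2 * E t)" using EN(1)[of t] S1 by (intro mult_left_mono) auto
  also have "\<dots> \<le> SQ * (2 * (E 0 * exp (KK * pi)))" using G S1 by (intro mult_left_mono) auto
  also have "\<dots> \<le> SQ * (2 * (3/2 * N 0 * exp (KK * pi)))" using EN(2)[of 0] S1 by (intro mult_left_mono) auto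
  also have "\<dots> \<le> SQ * (2 * (3/2 * (SQ * W 0) * exp (KK * pi)))" using NW(2)[of 0] S1 by (intro mult_left_mono) auto
  also have "\<dots> = 3 * SQ\<^sup>2 * exp (KK * pi) * W 0" by (simp add: power2_eq_square)
  finally show "W t \<le> 3 * SQ\<^sup>2 * exp (KK * pi) * W 0" .
  have "exp (- (KK * pi)) / (3 * SQ\<^sup>2) * W 0 = (1 / SQ) * ((2/3) * ((1/2) * (W 0 / SQ) * exp (- (KK * pi))))"
    using S1 by (simp add: power2_eq_square field_simps)
  also have "\<dots> \<le> (1 / SQ) * ((2/3) * ((1/2) * N 0 * exp (- (KK * pi))))"
    using NW(1)[of 0] S1 by (intro mult_left_mono mult_right_mono) auto
  also have "\<dots> \<le> (1 / SQ) * ((2/3) * (E 0 * exp (- (KK * pi))))"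
    using EN(1)[of 0] S1 by (intro mult_left_mono) auto
  also have "\<dots> \<le> (1 / SQ) * ((2/3) * E t)"
    using G S1 by (intro mult_left_mono) auto
  also have "\<dots> \<le> (1 / SQ) * N t"
    using EN(2)[of t] S1 by (intro mult_left_mono) auto
  also have "\<dots> \<le> (1 / SQ) * (SQ * W t)"
    using NW(2)[of t] S1 by (intro mult_left_mono) auto
  also have "\<dots> = W t" using S1 by simp
  finally show "exp (- (KK * pi)) / (3 * SQ\<^sup>2) * W 0 \<le> W t" .
qed

lemma final_ctx:
  assumes sol: "is_solution e mp Tp Tm k \<xi> A1 A2" and t: "t \<ge> 0"
  shows "exp (- (KK * pi)) * energy e mp Tp Tm k \<xi> A1 A2 0 \<le> energy e mp Tp Tm k \<xi> A1 A2 t \<and>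
          energy e mp Tp Tm k \<xi> A1 A2 t \<le> exp (KK * pi) * energy e mp Tp Tm k \<xi> A1 A2 0 \<and>
          sqrt (exp (- (KK * pi)) / (3 * SQ\<^sup>2)) * vnorm (A1 0) (A2 0) \<le> vnorm (A1 t) (A2 t) \<and>
          vnorm (A1 t) (A2 t) \<le> sqrt (3 * SQ\<^sup>2 * exp (KK * pi)) * vnorm (A1 0) (A2 0)"
proof -
  note G = energy_gron[OF sol t]
  note W = W_bounds[OF sol t]
  have v1: "vnorm (A1 t) (A2 t) \<le> sqrt (3 * SQ\<^sup>2 * exp (KK * pi)) * vnorm (A1 0) (A2 0)"
    unfolding vnorm_def real_sqrt_mult[symmetric] using W(1) by (intro real_sqrt_le_mono) simp
  have v2: "sqrt (exp (- (KK * pi)) / (3 * SQ\<^sup>2)) * vnorm (A1 0) (A2 0) \<le> vnorm (A1 t) (A2 t)"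
    unfolding vnorm_def real_sqrt_mult[symmetric] using W(2) by (intro real_sqrt_le_mono) simp
  show ?thesis using G v1 v2 by (simp add: mult.commute)
qed

end

lemma constants_ok:
  assumes "e > 0" "mp > 0" "Tp > 0" "Tm > 0"
  shows "0 < exp (- (KK e mp Tp * pi))" "exp (- (KK e mp Tp * pi)) \<le> exp (KK e mp Tp * pi)"
    "0 < sqrt (exp (- (KK e mp Tp * pi)) / (3 * (SQ e mp Tp Tm)\<^sup>2))"
    "sqrt (exp (- (KK e mp Tp * pi)) / (3 * (SQ e mp Tp Tm)\<^sup>2)) \<le> sqrt (3 * (SQ e mp Tp Tm)\<^sup>2 * exp (KK e mp Tp * pi))"
proof -
  have K: "KK e mp Tp \<ge> 0" using KK_nonneg[OF assms, of 1] by simp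
  have S: "SQ e mp Tp Tm \<ge> 1" using SQ_ge(1)[OF assms, of 1] by simp
  show "0 < exp (- (KK e mp Tp * pi))" by simp
  show "exp (- (KK e mp Tp * pi)) \<le> exp (KK e mp Tp * pi)" using K by simp
  show "0 < sqrt (exp (- (KK e mp Tp * pi)) / (3 * (SQ e mp Tp Tm)\<^sup>2))" using S by simp
  have s2: "(SQ e mp Tp Tm)\<^sup>2 \<ge> 1" using S by (simp add: one_le_power)
  have e1: "exp (- (KK e mp Tp * pi)) \<le> 1" using K by simp
  have e2: "exp (KK e mp Tp * pi) \<ge> 1" using K by simp
  have "exp (- (KK e mp Tp * pi)) / (3 * (SQ e mp Tp Tm)\<^sup>2) \<le> 1"
  proof -
    have "exp (- (KK e mp Tp * pi)) \<le> 1 * (3 * (SQ e mp Tp Tm)\<^sup>2)" using e1 s2 by linarith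
    then show ?thesis using s2 by (subst divide_le_eq) auto
  qed
  also have "1 \<le> 3 * (SQ e mp Tp Tm)\<^sup>2 * exp (KK e mp Tp * pi)"
  proof -
    have "1 * 1 \<le> (3 * (SQ e mp Tp Tm)\<^sup>2) * exp (KK e mp Tp * pi)"
      using s2 e2 by (intro mult_mono) auto
    then show ?thesis by simp
  qed
  finally show "sqrt (exp (- (KK e mp Tp * pi)) / (3 * (SQ e mp Tp Tm)\<^sup>2)) \<le> sqrt (3 * (SQ e mp Tp Tm)\<^sup>2 * exp (KK e mp Tp * pi))"
    by (rule real_sqrt_le_mono)
qed

theorem lemma3p1:
  fixes e mp Tp Tm :: real
  assumes "e > 0" "mp > 0" "Tp > 0" "Tm > 0"
  shows "\<exists>C1 C1' C2 C2' :: real. 0 < C1 \<and> C1 \<le> C1' \<and> 0 < C2 \<and> C2 \<le> C2' \<and>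
    (\<forall>(k::int) (\<xi>::real) (A1::real \<Rightarrow> complex) (A2::real \<Rightarrow> complex).
       k \<noteq> 0 \<longrightarrow> is_solution e mp Tp Tm k \<xi> A1 A2 \<longrightarrow>
       (\<forall>t\<ge>0.
          C1 * energy e mp Tp Tm k \<xi> A1 A2 0 \<le> energy e mp Tp Tm k \<xi> A1 A2 t \<and>
          energy e mp Tp Tm k \<xi> A1 A2 t \<le> C1' * energy e mp Tp Tm k \<xi> A1 A2 0 \<and>
          C2 * vnorm (A1 0) (A2 0) \<le> vnorm (A1 t) (A2 t) \<and>
          vnorm (A1 t) (A2 t) \<le> C2' * vnorm (A1 0) (A2 0)))"
  apply (rule exI[of _ "exp (- (KK e mp Tp * pi))"], rule exI[of _ "exp (KK e mp Tp * pi)"],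
         rule exI[of _ "sqrt (exp (- (KK e mp Tp * pi)) / (3 * (SQ e mp Tp Tm)\<^sup>2))"],
         rule exI[of _ "sqrt (3 * (SQ e mp Tp Tm)\<^sup>2 * exp (KK e mp Tp * pi))"])
  using constants_ok[OF assms] final_ctx[OF assms] by blast


end
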